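(* Let $G$ be a compact Lie group with Lie algebra $\mathfrak{g}$ and bi-invariant metric $\langle\cdot,\cdot\rangle_0$, $K\subseteq G$ a closed subgroup with Lie algebra $\mathfrak{k}$, $\mathfrak{p}=\mathfrak{k}^\perp$, $t>0$, $\phi(X)=X_{\mathfrak{p}}+\frac{t}{t+1}X_{\mathfrak{k}}$, and $\langle\cdot,\cdot\rangle_1$ the left-invariant metric with $\langle X,Y\rangle_1=\langle\phi(X),Y\rangle_0$. Let $U\subseteq K\times K$ be a closed subgroup acting freely on $G$ by $(u_1,u_2)\cdot g=u_1gu_2^{-1}$, and let $\Delta G\times U$ act on $G\times G$, equipped with the product metric $\langle\cdot,\cdot\rangle_1+\langle\cdot,\cdot\rangle_1$, by $(g,(u_1,u_2))\cdot(g_1,g_2)=(gg_1u_1^{-1},gg_2u_2^{-1})$. Let $g_1\in G$ and $X,Y\in\mathfrak{g}$, and suppose that the plane $\mathrm{span}\{(\phi^{-1}(-\mathrm{Ad}_{g_1^{-1}}X),\phi^{-1}(X)),(\phi^{-1}(-\mathrm{Ad}_{g_1^{-1}}Y),\phi^{-1}(Y))\}$, viewed (by left translation) in the tangent space at $(g_1,e)$, is horizontal for this action and has zero sectional curvature with respect to $\langle\cdot,\cdot\rangle_1+\langle\cdot,\cdot\rangle_1$. Then both two-planes $\mathrm{span}\{\phi^{-1}(\mathrm{Ad}_{g_1^{-1}}X),\phi^{-1}(\mathrm{Ad}_{g_1^{-1}}Y)\}$ and $\mathrm{span}\{\phi^{-1}(X),\phi^{-1}(Y)\}$ have zero curvature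 with respect to $\langle\cdot,\cdot\rangle_1$.
   Context: Subscripts $\mathfrak{k},\mathfrak{p}$ denote components in $\mathfrak{g}=\mathfrak{k}\oplus\mathfrak{p}$. Zero curvature of a plane spanned by $a,b$ means $\langle R(a,b)b,a\rangle=0$ for the relevant curvature tensor. *)

theory Defs
  imports "HOL-Analysis.Analysis"
begin

text \<open>Lie algebra level model. A Lie bracket on a finite-dimensional real inner
product space; the inner product plays the role of the bi-invariant metric.\<close>

definition is_lie_bracket :: "('v::real_vector \<Rightarrow> 'v \<Rightarrow> 'v) \<Rightarrow> bool" where
  "is_lie_bracket br \<longleftrightarrow> bilinear br \<and> (\<forall>x y. br x y = - br y x) \<and>
     (\<forall>x y z. br x (br y z) + br y (br z x) + br z (br x y) = 0)"

definition ad_invariant :: "('v::real_inner \<Rightarrow> 'v \<Rightarrow> 'v) \<Rightarrow> bool" where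
  "ad_invariant br \<longleftrightarrow> (\<forall>x y z. inner (br x y) z = - inner y (br x z))"

definition lie_subalgebra :: "('v::real_vector \<Rightarrow> 'v \<Rightarrow> 'v) \<Rightarrow> 'v set \<Rightarrow> bool" where
  "lie_subalgebra br s \<longleftrightarrow> subspace s \<and> (\<forall>x\<in>s. \<forall>y\<in>s. br x y \<in> s)"

definition kproj :: "'a::euclidean_space set \<Rightarrow> 'a \<Rightarrow> 'a" where
  "kproj k x = (THE y. y \<in> k \<and> (\<forall>z\<in>k. inner (x - y) z = 0))"

definition cheeger_phi :: "real \<Rightarrow> 'a::euclidean_space set \<Rightarrow> 'a \<Rightarrow> 'a" where
  "cheeger_phi t k X = (X - kproj k X) + (t / (t + 1)) *\<^sub>R kproj k X"

definition metric1 :: "real \<Rightarrow> 'a::euclidean_space set \<Rightarrow> 'a \<Rightarrow> 'a \<Rightarrow> real" where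
  "metric1 t k X Y = inner (cheeger_phi t k X) Y"

text \<open>Levi-Civita connection of a left-invariant metric m on left-invariant fields
(Koszul formula) and its curvature tensor R(X,Y)Z.\<close>
definition lc_conn :: "('v::real_vector \<Rightarrow> 'v \<Rightarrow> real) \<Rightarrow> ('v \<Rightarrow> 'v \<Rightarrow> 'v) \<Rightarrow> 'v \<Rightarrow> 'v \<Rightarrow> 'v" where
  "lc_conn m br X Y = (THE w. \<forall>Z. 2 * m w Z = m (br X Y) Z - m (br Y Z) X + m (br Z X) Y)"

definition curv :: "('v::real_vector \<Rightarrow> 'v \<Rightarrow> real) \<Rightarrow> ('v \<Rightarrow> 'v \<Rightarrow> 'v) \<Rightarrow> 'v \<Rightarrow> 'v \<Rightarrow> 'v \<Rightarrow> 'v" where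
  "curv m br X Y Z = lc_conn m br X (lc_conn m br Y Z) - lc_conn m br Y (lc_conn m br X Z)
      - lc_conn m br (br X Y) Z"

definition zero_curv :: "('v::real_vector \<Rightarrow> 'v \<Rightarrow> real) \<Rightarrow> ('v \<Rightarrow> 'v \<Rightarrow> 'v) \<Rightarrow> 'v \<Rightarrow> 'v \<Rightarrow> bool" where
  "zero_curv m br a b \<longleftrightarrow> m (curv m br a b b) a = 0"

definition prod_br :: "('a \<Rightarrow> 'a \<Rightarrow> 'a) \<Rightarrow> 'a \<times> 'a \<Rightarrow> 'a \<times> 'a \<Rightarrow> 'a \<times> 'a" where
  "prod_br br p q = (br (fst p) (fst q), br (snd p) (snd q))"

definition prod_metric :: "('a \<Rightarrow> 'a \<Rightarrow> real) \<Rightarrow> 'a \<times> 'a \<Rightarrow> 'a \<times> 'a \<Rightarrow> real" where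
  "prod_metric m p q = m (fst p) (fst q) + m (snd p) (snd q)"

text \<open>Vertical space at (g1,e) of the Delta G x U action, left-translated to g x g:
 vectors (Ad_{g1^-1} Z - W1, Z - W2), Z in g, (W1,W2) in Lie(U); here A = Ad_{g1^-1}.\<close>
definition vertical_space :: "('a::real_vector \<Rightarrow> 'a) \<Rightarrow> ('a \<times> 'a) set \<Rightarrow> ('a \<times> 'a) set" where
  "vertical_space A u = {(A Z - fst w, Z - snd w) | Z w. w \<in> u}"

end

theory Submission
  imports Defs
begin

lemma alg:
  fixes c e g1 g2 f :: "'a::real_inner" and mu :: real
  assumes z: "inner c g1 = 0" "inner c g2 = 0" "inner c f = 0" "inner e g1 = 0" "inner e g2 = 0" "inner e f = 0"
  shows "- (mu ^ 2 * (inner c e - inner g1 g2))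
      + inner ((1/2) *\<^sub>R ((c + e) + (g1 + g2 + f)) + (mu/2) *\<^sub>R (g1 - g2)) (- (1/2) *\<^sub>R (((c + e) + (g1 + g2 + f)) - mu *\<^sub>R (c + e)) + (mu/2) *\<^sub>R (g1 - g2))
      - (1/2) * (inner ((c + e) + (g1 + g2 + f)) (- ((c + e) + (g1 + g2 + f)) + mu *\<^sub>R (c + g1))
               + inner ((c + e) + (g1 + g2 + f)) (((c + e) + (g1 + g2 + f)) - mu *\<^sub>R (c + e))
               - inner ((c + e) + (g1 + g2 + f)) (((c + e) + (g1 + g2 + f)) - mu *\<^sub>R (c + g2)))
    = (1 - mu) / 4 * inner (c + (1 + 2 * mu) *\<^sub>R e) (c + (1 + 2 * mu) *\<^sub>R e) + mu ^ 3 * inner e e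
   + 1 / 4 * inner ((1 - mu) *\<^sub>R (g1 + g2) + f) ((1 - mu) *\<^sub>R (g1 + g2) + f)"
proof -
  have z2: "inner g1 c = 0" "inner g2 c = 0" "inner f c = 0" "inner g1 e = 0" "inner g2 e = 0" "inner f e = 0"
    using z by (simp_all add: inner_commute)
  have s: "inner g2 g1 = inner g1 g2" "inner f g1 = inner g1 f" "inner f g2 = inner g2 f" "inner e c = inner c e"
    by (simp_all add: inner_commute)
  show ?thesis
    apply (simp only: inner_add_left inner_add_right inner_diff_left inner_diff_right inner_scaleR_left inner_scaleR_right
        inner_minus_left inner_minus_right z z2 s)
    apply (simp add: algebra_simps power2_eq_square power3_eq_cube)
    apply (simp add: field_simps)
    done
qed


locale chg =
  fixes br :: "'a::euclidean_space \<Rightarrow> 'a \<Rightarrow> 'a" and k :: "'a set" and t :: real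
  assumes lie: "is_lie_bracket br" and biinv: "ad_invariant br"
    and ksub: "lie_subalgebra br k" and tpos: "t > 0"
begin

lemma bil: "bilinear br" using lie unfolding is_lie_bracket_def by blast
lemma anti: "br x y = - br y x" using lie unfolding is_lie_bracket_def by blast
lemma jacobi: "br x (br y z) + br y (br z x) + br z (br x y) = 0" using lie unfolding is_lie_bracket_def by blast
lemma adinv: "inner (br x y) z = - inner y (br x z)" using biinv unfolding ad_invariant_def by blast
lemma subk: "subspace k" using ksub unfolding lie_subalgebra_def by blast
lemma brk: "x \<in> k \<Longrightarrow> y \<in> k \<Longrightarrow> br x y \<in> k" using ksub unfolding lie_subalgebra_def by blast
lemma spank: "span k = k" using subk by (simp add: span_eq_iff)

lemmas brs = bilinear_ladd[OF bil] bilinear_radd[OF bil] bilinear_lmul[OF bil] bilinear_rmul[OF bil]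
  bilinear_lneg[OF bil] bilinear_rneg[OF bil] bilinear_lsub[OF bil] bilinear_rsub[OF bil]
  bilinear_lzero[OF bil] bilinear_rzero[OF bil]

lemma br_self: "br x x = 0"
proof -
  have "br x x + br x x = 0" using anti[of x x] by (metis add.right_inverse)
  then have "2 *\<^sub>R br x x = 0" by (simp add: scaleR_2)
  then show ?thesis by simp
qed

definition orth :: "'a \<Rightarrow> bool" where "orth x \<longleftrightarrow> (\<forall>z\<in>k. inner x z = 0)"

lemma kproj_char: "y \<in> k \<Longrightarrow> orth (x - y) \<Longrightarrow> kproj k x = y"
  unfolding kproj_def
proof (rule the_equality)
  show "y \<in> k \<and> (\<forall>z\<in>k. inner (x - y) z = 0)" if "y \<in> k" "orth (x - y)" using that orth_def by auto
  fix y' assume a: "y \<in> k" "orth (x - y)" and b: "y' \<in> k \<and> (\<forall>z\<in>k. inner (x - y') z = 0)"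
  have d: "y' - y \<in> k" using a b subk by (simp add: subspace_diff)
  have "inner (x - y) (y' - y) = 0" "inner (x - y') (y' - y) = 0" using a b d orth_def by auto
  then have "inner (y' - y) (y' - y) = 0" by (simp add: inner_diff_left inner_diff_right)
  then show "y' = y" by simp
qed

lemma kproj_ex: "\<exists>y. y \<in> k \<and> orth (x - y)"
proof -
  obtain y z where "y \<in> span k" "\<And>w. w \<in> span k \<Longrightarrow> orthogonal z w" "x = y + z"
    using orthogonal_subspace_decomp_exists by blast
  then show ?thesis unfolding orth_def orthogonal_def spank by (intro exI[of _ y]) auto
qed

lemma kproj_in: "kproj k x \<in> k" and kproj_orth: "orth (x - kproj k x)"
  using kproj_ex[of x] kproj_char by auto

lemma orth_add: "orth x \<Longrightarrow> orth y \<Longrightarrow> orth (x + y)" by (simp add: orth_def inner_add_left)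
lemma orth_diff: "orth x \<Longrightarrow> orth y \<Longrightarrow> orth (x - y)" by (simp add: orth_def inner_diff_left)
lemma orth_scale: "orth x \<Longrightarrow> orth (c *\<^sub>R x)" by (simp add: orth_def)
lemma orth_neg: "orth x \<Longrightarrow> orth (- x)" by (simp add: orth_def)
lemma orth_zero: "orth 0" by (simp add: orth_def)

lemma kproj_split: "a \<in> k \<Longrightarrow> orth x \<Longrightarrow> kproj k (a + x) = a"
  by (rule kproj_char) auto

lemma orth_k: "a \<in> k \<Longrightarrow> orth x \<Longrightarrow> inner a x = 0" "a \<in> k \<Longrightarrow> orth x \<Longrightarrow> inner x a = 0"
  by (auto simp: orth_def inner_commute)

lemma orth_br: "a \<in> k \<Longrightarrow> orth y \<Longrightarrow> orth (br a y)"
  unfolding orth_def using adinv brk orth_k by (metis neg_equal_0_iff_equal)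

lemma decomp: obtains a x where "a \<in> k" "orth x" "v = a + x"
  using kproj_in kproj_orth by (metis add.commute diff_add_cancel)

lemma kproj_linear: "linear (kproj k)"
proof (rule linearI)
  fix x y
  show "kproj k (x + y) = kproj k x + kproj k y"
    using kproj_in[of x] kproj_in[of y] kproj_orth[of x] kproj_orth[of y]
    by (intro kproj_char) (auto simp: subk subspace_add dest: orth_add simp: algebra_simps)
next
  fix c x
  show "kproj k (c *\<^sub>R x) = c *\<^sub>R kproj k x"
    using kproj_in[of x] kproj_orth[of x]
    by (intro kproj_char) (auto simp: subk subspace_scale dest: orth_scale[of _ c] simp: algebra_simps)
qed

definition lam where "lam = t / (t + 1)"
lemma lam_pos: "0 < lam" and lam_lt1: "lam < 1" using tpos by (auto simp: lam_def)

lemma phi_split: "a \<in> k \<Longrightarrow> orth x \<Longrightarrow> cheeger_phi t k (a + x) = x + lam *\<^sub>R a"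
  by (simp add: cheeger_phi_def kproj_split lam_def)

definition mu where "mu = 1 - lam"
lemma mu_pos: "0 < mu" and mu_lt1: "mu < 1" using lam_pos lam_lt1 by (auto simp: mu_def)

abbreviation "P \<equiv> kproj k"
abbreviation "phi \<equiv> cheeger_phi t k"
abbreviation "m \<equiv> metric1 t k"

lemma P_add: "P (x + y) = P x + P y" and P_scale: "P (c *\<^sub>R x) = c *\<^sub>R P x"
  and P_neg: "P (- x) = - P x" and P_diff: "P (x - y) = P x - P y" and P_zero: "P 0 = 0"
  using kproj_linear by (auto simp: linear_add linear_cmul linear_neg linear_diff linear_0)

lemma phi_eq: "phi v = v - mu *\<^sub>R P v"
  by (simp add: cheeger_phi_def mu_def lam_def algebra_simps)

lemma phi_linear: "linear phi"
  unfolding phi_eq by (intro linearI) (auto simp: P_add P_scale algebra_simps)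

lemma phi_add: "phi (x + y) = phi x + phi y" and phi_scale: "phi (c *\<^sub>R x) = c *\<^sub>R phi x"
  and phi_neg: "phi (- x) = - phi x" and phi_diff: "phi (x - y) = phi x - phi y" and phi_zero: "phi 0 = 0"
  using phi_linear by (auto simp: linear_add linear_cmul linear_neg linear_diff linear_0)

lemma phi_orth: "orth x \<Longrightarrow> phi x = x"
  using phi_split[of 0 x] subk by (simp add: subspace_0)

lemma phi_sym: "inner (phi u) v = inner u (phi v)"
proof -
  obtain a x where ax: "a \<in> k" "orth x" "u = a + x" by (rule decomp)
  obtain b y where bb: "b \<in> k" "orth y" "v = b + y" by (rule decomp)
  have 1: "inner a y = 0" "inner y a = 0" "inner b x = 0" "inner x b = 0"
    using orth_k[OF ax(1) bb(2)] orth_k[OF bb(1) ax(2)] by auto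
  show ?thesis unfolding ax(3) bb(3) phi_split[OF ax(1,2)] phi_split[OF bb(1,2)]
    using 1 by (simp add: inner_add_left inner_add_right inner_commute)
qed

lemma phi_inj: "inj phi"
proof (rule injI)
  fix u v assume "phi u = phi v"
  then have e: "phi (u - v) = 0" by (simp add: phi_diff)
  obtain a x where ax: "a \<in> k" "orth x" "u - v = a + x" by (rule decomp)
  have 1: "x + lam *\<^sub>R a = 0" using e ax phi_split by simp
  have "inner x (x + lam *\<^sub>R a) = 0" using 1 by simp
  then have "inner x x = 0" using orth_k[OF ax(1,2)] by (simp add: inner_add_right)
  then have "x = 0" by simp
  then have "a = 0" using 1 lam_pos by simp
  then show "u = v" using ax \<open>x = 0\<close> by simp
qed

lemma phi_surj: "surj phi"
proof -
  have "v \<in> range phi" for v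
  proof -
    obtain a x where ax: "a \<in> k" "orth x" "v = a + x" by (rule decomp)
    have "(1/lam) *\<^sub>R a \<in> k" using ax subk by (simp add: subspace_scale)
    then have "phi ((1/lam) *\<^sub>R a + x) = v" using phi_split ax lam_pos by simp
    then show ?thesis by (rule range_eqI[OF sym])
  qed
  then show ?thesis by auto
qed

lemma phi_bij: "bij phi" using phi_inj phi_surj by (simp add: bij_def)

lemma phi_inv: "phi (inv phi v) = v" using phi_surj by (simp add: surj_f_inv_f)

lemma inv_neg: "inv phi (- v) = - inv phi v"
proof -
  have "phi (- inv phi v) = - v" by (simp add: phi_neg phi_inv)
  moreover have "phi (inv phi (- v)) = - v" by (rule phi_inv)
  ultimately have "phi (inv phi (- v)) = phi (- inv phi v)" by simp
  then show ?thesis by (rule injD[OF phi_inj])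
qed

lemma m_def': "m u v = inner (phi u) v" by (simp add: metric1_def)
lemma m_sym: "m u v = m v u" unfolding metric1_def phi_sym[of u v] by (rule inner_commute)

definition Q where "Q v = v - P v"
definition C where "C X Y = (1/2) *\<^sub>R br X Y + (mu/2) *\<^sub>R (br (P X) (Q Y) + br (P Y) (Q X))"

lemma PQ: "a \<in> k \<Longrightarrow> orth x \<Longrightarrow> P (a + x) = a \<and> Q (a + x) = x"
  by (simp add: kproj_split Q_def)

lemma C_koszul: "2 * m (C X Y) Z = m (br X Y) Z - m (br Y Z) X + m (br Z X) Y"
proof -
  obtain a x where ax: "a \<in> k" "orth x" "X = a + x" by (rule decomp)
  obtain b y where bb: "b \<in> k" "orth y" "Y = b + y" by (rule decomp)
  define V where "V = br a y + br b x"
  have oV: "orth V" unfolding V_def using orth_br ax bb by (simp add: orth_add)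
  have CV: "C X Y = (1/2) *\<^sub>R br X Y + (mu/2) *\<^sub>R V"
    using PQ ax bb by (simp add: C_def V_def)
  have L: "2 * m (C X Y) Z = m (br X Y) Z + mu * inner V Z"
    unfolding CV m_def' using phi_orth[OF oV] by (simp add: phi_add phi_scale inner_add_left)
  have pX: "phi X = X - mu *\<^sub>R a" using PQ ax by (simp add: phi_eq)
  have pY: "phi Y = Y - mu *\<^sub>R b" using PQ bb by (simp add: phi_eq)
  have r1: "m (br Y Z) X = inner (br Y Z) X - mu * inner (br Y Z) a"
    by (simp add: m_def' phi_sym pX inner_diff_right)
  have r2: "m (br Z X) Y = inner (br Z X) Y - mu * inner (br Z X) b"
    by (simp add: m_def' phi_sym pY inner_diff_right)
  have c1: "inner (br Z X) Y = inner (br Y Z) X"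
  proof -
    have "inner (br Z X) Y = - inner X (br Z Y)" by (rule adinv)
    also have "br Z Y = - br Y Z" by (rule anti)
    finally show ?thesis by (simp only: inner_minus_right minus_minus inner_commute)
  qed
  have c2: "inner (br Y Z) a = - inner Z (br Y a)" using adinv[of Y Z a] by simp
  have c3: "inner (br Z X) b = inner Z (br X b)"
  proof -
    have "br Z X = - br X Z" by (rule anti)
    then have "inner (br Z X) b = - inner (br X Z) b" by simp
    also have "inner (br X Z) b = - inner Z (br X b)" by (rule adinv)
    finally show ?thesis by simp
  qed
  have c4: "V = br a Y - br X b"
  proof -
    have "br b x = - br x b" by (rule anti)
    then show ?thesis unfolding V_def ax(3) bb(3) by (simp add: brs)
  qed
  have c5: "inner V Z = - inner Z (br Y a) - inner Z (br X b)"
  proof -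
    have "br Y a = - br a Y" by (rule anti)
    then have "inner Z (br Y a) = - inner (br a Y) Z" by (simp add: inner_commute)
    moreover have "inner Z (br X b) = inner (br X b) Z" by (rule inner_commute)
    ultimately show ?thesis unfolding c4 inner_diff_left by simp
  qed
  have d5: "mu * inner V Z = - (mu * inner Z (br Y a)) - mu * inner Z (br X b)"
    unfolding c5 by (simp add: algebra_simps)
  have d2: "mu * inner (br Y Z) a = - (mu * inner Z (br Y a))" unfolding c2 by simp
  have d3: "mu * inner (br Z X) b = mu * inner Z (br X b)" unfolding c3 by simp
  show ?thesis using L r1 r2 c1 d2 d3 d5 by linarith
qed

lemma conn_eq: "lc_conn m br X Y = C X Y"
  unfolding lc_conn_def
proof (rule the_equality)
  show "\<forall>Z. 2 * m (C X Y) Z = m (br X Y) Z - m (br Y Z) X + m (br Z X) Y" by (intro allI C_koszul)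
  fix w assume w: "\<forall>Z. 2 * m w Z = m (br X Y) Z - m (br Y Z) X + m (br Z X) Y"
  have "inner (phi w) Z = inner (phi (C X Y)) Z" for Z
  proof -
    have "2 * m w Z = m (br X Y) Z - m (br Y Z) X + m (br Z X) Y" using w by (rule spec)
    then have "2 * m w Z = 2 * m (C X Y) Z" using C_koszul[of X Y Z] by linarith
    then show ?thesis by (simp only: m_def' mult_cancel_left) simp
  qed
  then have "\<forall>Z. inner (phi w - phi (C X Y)) Z = 0"
    by (simp only: inner_diff_left) simp
  then have "inner (phi w - phi (C X Y)) (phi w - phi (C X Y)) = 0" by (rule spec)
  then have "phi w - phi (C X Y) = 0" by (simp only: inner_eq_zero_iff)
  then have "phi w = phi (C X Y)" by (simp only: right_minus_eq)
  then show "w = C X Y" using phi_inj by (meson injD)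
qed


lemma m_add: "m (u + v) w = m u w + m v w" by (simp add: m_def' phi_add inner_add_left)
lemma m_diff: "m (u - v) w = m u w - m v w" by (simp add: m_def' phi_diff inner_diff_left)
lemma m_neg: "m (- u) w = - m u w" by (simp add: m_def' phi_neg)
lemma m_right: "m u v = inner u (phi v)" by (simp add: m_def' phi_sym)

lemma compat: "m (C A B) D = - m B (C A D)"
proof -
  have 1: "2 * m (C A B) D = m (br A B) D - m (br B D) A + m (br D A) B" by (rule C_koszul)
  have 2: "2 * m (C A D) B = m (br A D) B - m (br D B) A + m (br B A) D" by (rule C_koszul)
  have 3: "m (br B A) D = - m (br A B) D" using anti[of B A] by (simp add: m_neg)
  have 4: "m (br D B) A = - m (br B D) A" using anti[of D B] by (simp add: m_neg)
  have 5: "m (br A D) B = - m (br D A) B" using anti[of A D] by (simp add: m_neg)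
  have "m B (C A D) = m (C A D) B" by (rule m_sym)
  then show ?thesis using 1 2 3 4 5 by linarith
qed

lemma sec_split: "m (curv m br X Y Y) X = - m (C Y Y) (C X X) + m (C X Y) (C Y X) - m (C (br X Y) Y) X"
proof -
  have "m (curv m br X Y Y) X = m (C X (C Y Y)) X - m (C Y (C X Y)) X - m (C (br X Y) Y) X"
    unfolding curv_def conn_eq by (simp add: m_diff)
  moreover have "m (C X (C Y Y)) X = - m (C Y Y) (C X X)" by (rule compat)
  moreover have "m (C Y (C X Y)) X = - m (C X Y) (C Y X)" by (rule compat)
  ultimately show ?thesis by linarith
qed

lemma inner_swap: "inner (br Z Y) w = inner Z (br Y w)"
proof -
  have "br Z Y = - br Y Z" by (rule anti)
  then have "inner (br Z Y) w = - inner (br Y Z) w" by simp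
  also have "inner (br Y Z) w = - inner Z (br Y w)" by (rule adinv)
  finally show ?thesis by simp
qed

lemma jac_inner: "inner (br a x) (br b y) = inner (br a b) (br x y) - inner (br a y) (br x b)"
proof -
  have j: "br x (br b y) = - br b (br y x) - br y (br x b)"
    using jacobi[of x b y] by (simp add: algebra_simps eq_neg_iff_add_eq_0)
  have 1: "inner (br a x) (br b y) = inner a (br x (br b y))"
    using inner_swap[of a x "br b y"] anti[of a x] by simp
  have 2: "inner a (br b w) = inner (br a b) w" for w
    using adinv[of b a w] anti[of b a] by simp
  have 3: "br y x = - br x y" by (rule anti)
  have 4: "inner a (br y w) = inner (br a y) w" for w
    using adinv[of y a w] anti[of y a] by simp
  show ?thesis unfolding 1 j using 2 3 4 by (simp add: inner_diff_right)
qed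

lemma t1: "a \<in> k \<Longrightarrow> orth x \<Longrightarrow> b \<in> k \<Longrightarrow> orth y \<Longrightarrow> br (a + x) (b + y) = (br a b + P (br x y)) + (br a y + br x b + (br x y - P (br x y)))"
  by (simp add: brs algebra_simps)
lemma t2: "b \<in> k \<Longrightarrow> orth y \<Longrightarrow> C (b + y) (b + y) = mu *\<^sub>R br b y"
proof -
  assume "b \<in> k" "orth y"
  then have "C (b + y) (b + y) = (mu/2) *\<^sub>R (br b y + br b y)"
    unfolding C_def using PQ br_self by (simp del: scaleR_2)
  also have "\<dots> = (mu/2) *\<^sub>R (2 *\<^sub>R br b y)" by (simp only: scaleR_2)
  also have "\<dots> = mu *\<^sub>R br b y" by simp
  finally show ?thesis .
qed
lemma t3: "orth v \<Longrightarrow> m (mu *\<^sub>R w) (mu *\<^sub>R v) = mu ^ 2 * inner v w"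
  unfolding m_right using phi_orth[OF orth_scale] by (simp add: inner_commute power2_eq_square)
lemma t4: "a \<in> k \<Longrightarrow> orth x \<Longrightarrow> b \<in> k \<Longrightarrow> orth y \<Longrightarrow> C (a + x) (b + y) = (1/2) *\<^sub>R br (a + x) (b + y) + (mu/2) *\<^sub>R (br a y - br x b)"
  unfolding C_def using PQ anti[of b x] by simp
lemma t5: "a \<in> k \<Longrightarrow> orth x \<Longrightarrow> b \<in> k \<Longrightarrow> orth y \<Longrightarrow> C (b + y) (a + x) = - (1/2) *\<^sub>R br (a + x) (b + y) + (mu/2) *\<^sub>R (br a y - br x b)"
  unfolding C_def using PQ anti[of b x] anti[of "b + y" "a + x"] by simp
lemma t6: "br (b + y) (X - mu *\<^sub>R a) = - br X (b + y) + mu *\<^sub>R (br a b + br a y)"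
  using anti[of "b + y" X] anti[of b a] anti[of y a] by (simp add: brs algebra_simps)
lemma t7: "br (a + x) (Y - mu *\<^sub>R b) = br (a + x) Y - mu *\<^sub>R (br a b + br x b)"
  by (simp add: brs algebra_simps)

definition F where "F a x b y =
  (let c = br a b; g1 = br a y; g2 = br x b; e = P (br x y); f = br x y - e in
   (1 - mu) / 4 * inner (c + (1 + 2 * mu) *\<^sub>R e) (c + (1 + 2 * mu) *\<^sub>R e) + mu ^ 3 * inner e e
   + 1 / 4 * inner ((1 - mu) *\<^sub>R (g1 + g2) + f) ((1 - mu) *\<^sub>R (g1 + g2) + f))"

lemma F_nonneg: "F a x b y \<ge> 0"
  using mu_pos mu_lt1 unfolding F_def Let_def by (intro add_nonneg_nonneg mult_nonneg_nonneg) auto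

lemma sec_formula:
  assumes ak: "a \<in> k" and ox: "orth x" and bk: "b \<in> k" and oy: "orth y"
  shows "m (curv m br (a + x) (b + y) (b + y)) (a + x) = F a x b y"
proof -
  define c where "c = br a b"
  define g1 where "g1 = br a y"
  define g2 where "g2 = br x b"
  define e where "e = P (br x y)"
  define f where "f = br x y - e"
  define Z where "Z = br (a + x) (b + y)"
  define V where "V = g1 - g2"
  have ck: "c \<in> k" unfolding c_def using ak bk brk by blast
  have ek: "e \<in> k" unfolding e_def by (rule kproj_in)
  have og1: "orth g1" unfolding g1_def using ak oy by (rule orth_br)
  have og2: "orth g2" unfolding g2_def using anti[of x b] orth_neg[OF orth_br[OF bk ox]] by simp
  have of: "orth f" unfolding f_def e_def by (rule kproj_orth)
  have oV: "orth V" unfolding V_def using og1 og2 by (rule orth_diff)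
  have Zeq: "Z = (c + e) + (g1 + g2 + f)"
    unfolding Z_def c_def g1_def g2_def f_def e_def using ak ox bk oy by (rule t1)
  have cek: "c + e \<in> k" using ck ek subk by (simp add: subspace_add)
  have ogf: "orth (g1 + g2 + f)" using og1 og2 of by (simp add: orth_add)
  have PZ: "P Z = c + e" unfolding Zeq using cek ogf by (rule kproj_split)
  have phiZ: "phi Z = Z - mu *\<^sub>R (c + e)" using PZ by (simp add: phi_eq)
  have phiX: "phi (a + x) = (a + x) - mu *\<^sub>R a" using PQ[OF ak ox] by (simp add: phi_eq)
  have phiY: "phi (b + y) = (b + y) - mu *\<^sub>R b" using PQ[OF bk oy] by (simp add: phi_eq)
  have CYY: "C (b + y) (b + y) = mu *\<^sub>R br b y" using bk oy by (rule t2)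
  have CXX: "C (a + x) (a + x) = mu *\<^sub>R br a x" using ak ox by (rule t2)
  have CXY: "C (a + x) (b + y) = (1/2) *\<^sub>R Z + (mu/2) *\<^sub>R V"
    unfolding Z_def V_def g1_def g2_def using ak ox bk oy by (rule t4)
  have CYX: "C (b + y) (a + x) = - (1/2) *\<^sub>R Z + (mu/2) *\<^sub>R V"
    unfolding Z_def V_def g1_def g2_def using ak ox bk oy by (rule t5)
  have oax: "orth (br a x)" using ak ox by (rule orth_br)
  have T1: "m (C (b + y) (b + y)) (C (a + x) (a + x)) = mu ^ 2 * (inner c e - inner g1 g2)"
  proof -
    have "m (C (b + y) (b + y)) (C (a + x) (a + x)) = mu ^ 2 * inner (br a x) (br b y)"
      unfolding CYY CXX using oax by (rule t3)
    also have "inner (br a x) (br b y) = inner c (e + f) - inner g1 g2"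
    proof -
      have "br x y = e + f" unfolding f_def by simp
      then show ?thesis using jac_inner[of a x b y] unfolding c_def g1_def g2_def by simp
    qed
    also have "inner c (e + f) = inner c e" using orth_k[OF ck of] by (simp add: inner_add_right)
    finally show ?thesis .
  qed
  have T2: "m (C (a + x) (b + y)) (C (b + y) (a + x)) = inner ((1/2) *\<^sub>R Z + (mu/2) *\<^sub>R V) (- (1/2) *\<^sub>R (Z - mu *\<^sub>R (c + e)) + (mu/2) *\<^sub>R V)"
    unfolding CXY CYX m_right by (simp only: phi_add phi_scale phi_neg phiZ phi_orth[OF oV] scaleR_minus_left)
  have T3: "2 * m (C Z (b + y)) (a + x) = m (br Z (b + y)) (a + x) - m (br (b + y) (a + x)) Z + m (br (a + x) Z) (b + y)"
    by (rule C_koszul)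
  have T3a: "m (br Z (b + y)) (a + x) = inner Z (- Z + mu *\<^sub>R (c + g1))"
  proof -
    have "m (br Z (b + y)) (a + x) = inner Z (br (b + y) (phi (a + x)))" unfolding m_right by (rule inner_swap)
    also have "br (b + y) (phi (a + x)) = - Z + mu *\<^sub>R (c + g1)"
      unfolding phiX Z_def c_def g1_def by (rule t6)
    finally show ?thesis .
  qed
  have T3b: "m (br (b + y) (a + x)) Z = - inner Z (Z - mu *\<^sub>R (c + e))"
  proof -
    have "br (b + y) (a + x) = - Z" unfolding Z_def by (rule anti)
    then show ?thesis unfolding m_right phiZ by simp
  qed
  have T3c: "m (br (a + x) Z) (b + y) = - inner Z (Z - mu *\<^sub>R (c + g2))"
  proof -
    have "m (br (a + x) Z) (b + y) = - inner Z (br (a + x) (phi (b + y)))" unfolding m_right by (rule adinv)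
    also have "br (a + x) (phi (b + y)) = Z - mu *\<^sub>R (c + g2)"
      unfolding phiY Z_def c_def g2_def by (rule t7)
    finally show ?thesis .
  qed
  have M2: "2 * m (C Z (b + y)) (a + x) = inner Z (- Z + mu *\<^sub>R (c + g1)) + inner Z (Z - mu *\<^sub>R (c + e)) - inner Z (Z - mu *\<^sub>R (c + g2))"
    using T3 unfolding T3a T3b T3c by simp
  have M: "m (C Z (b + y)) (a + x) = (1/2) * (inner Z (- Z + mu *\<^sub>R (c + g1)) + inner Z (Z - mu *\<^sub>R (c + e)) - inner Z (Z - mu *\<^sub>R (c + g2)))"
    using M2 by simp
  have S: "m (curv m br (a + x) (b + y) (b + y)) (a + x) = - (mu ^ 2 * (inner c e - inner g1 g2))
      + inner ((1/2) *\<^sub>R Z + (mu/2) *\<^sub>R V) (- (1/2) *\<^sub>R (Z - mu *\<^sub>R (c + e)) + (mu/2) *\<^sub>R V)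
      - (1/2) * (inner Z (- Z + mu *\<^sub>R (c + g1)) + inner Z (Z - mu *\<^sub>R (c + e)) - inner Z (Z - mu *\<^sub>R (c + g2)))"
    unfolding sec_split[of "a + x" "b + y", folded Z_def] T1 T2 M by (rule refl)
  have z: "inner c g1 = 0" "inner c g2 = 0" "inner c f = 0" "inner e g1 = 0" "inner e g2 = 0" "inner e f = 0"
    using orth_k ck ek og1 og2 of by auto
  have Fe: "F a x b y = (1 - mu) / 4 * inner (c + (1 + 2 * mu) *\<^sub>R e) (c + (1 + 2 * mu) *\<^sub>R e) + mu ^ 3 * inner e e
   + 1 / 4 * inner ((1 - mu) *\<^sub>R (g1 + g2) + f) ((1 - mu) *\<^sub>R (g1 + g2) + f)"
    unfolding F_def c_def g1_def g2_def e_def f_def Let_def by (rule refl)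
  show ?thesis unfolding S Fe Zeq V_def by (rule alg[OF z])
qed


lemma m_uniq: assumes "\<And>Z. m u Z = m v Z" shows "u = v"
proof -
  have "inner (phi u - phi v) Z = 0" for Z using assms[of Z] by (simp add: m_def' inner_diff_left)
  then have "inner (phi u - phi v) (phi u - phi v) = 0" by blast
  then have "phi u - phi v = 0" by (simp only: inner_eq_zero_iff)
  then have "phi u = phi v" by (simp only: right_minus_eq)
  then show "u = v" by (rule injD[OF phi_inj])
qed

lemma m_zero_right: "m u 0 = 0" by (simp add: m_def')
lemma m_zero_left: "m 0 u = 0" by (simp add: m_def' phi_zero)

lemma prod_conn: fixes p q :: "'a \<times> 'a" shows "lc_conn (prod_metric m) (prod_br br) p q = (C (fst p) (fst q), C (snd p) (snd q))"
  unfolding lc_conn_def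
proof (rule the_equality)
  show "\<forall>Z. 2 * prod_metric m (C (fst p) (fst q), C (snd p) (snd q)) Z =
      prod_metric m (prod_br br p q) Z - prod_metric m (prod_br br q Z) p + prod_metric m (prod_br br Z p) q"
  proof
    fix Z :: "'a \<times> 'a"
    have 1: "2 * m (C (fst p) (fst q)) (fst Z) = m (br (fst p) (fst q)) (fst Z) - m (br (fst q) (fst Z)) (fst p) + m (br (fst Z) (fst p)) (fst q)"
      by (rule C_koszul)
    have 2: "2 * m (C (snd p) (snd q)) (snd Z) = m (br (snd p) (snd q)) (snd Z) - m (br (snd q) (snd Z)) (snd p) + m (br (snd Z) (snd p)) (snd q)"
      by (rule C_koszul)
    show "2 * prod_metric m (C (fst p) (fst q), C (snd p) (snd q)) Z =
      prod_metric m (prod_br br p q) Z - prod_metric m (prod_br br q Z) p + prod_metric m (prod_br br Z p) q"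
      unfolding prod_metric_def prod_br_def fst_conv snd_conv distrib_left using 1 2 by linarith
  qed
next
  fix w assume w: "\<forall>Z. 2 * prod_metric m w Z =
      prod_metric m (prod_br br p q) Z - prod_metric m (prod_br br q Z) p + prod_metric m (prod_br br Z p) q"
  have "m (fst w) Z1 = m (C (fst p) (fst q)) Z1" for Z1
  proof -
    have "2 * prod_metric m w (Z1, 0) =
      prod_metric m (prod_br br p q) (Z1, 0) - prod_metric m (prod_br br q (Z1, 0)) p + prod_metric m (prod_br br (Z1, 0) p) q"
      using w by (rule spec)
    then have "2 * m (fst w) Z1 = m (br (fst p) (fst q)) Z1 - m (br (fst q) Z1) (fst p) + m (br Z1 (fst p)) (fst q)"
      unfolding prod_metric_def prod_br_def fst_conv snd_conv by (simp add: m_zero_right m_zero_left brs)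
    then show ?thesis using C_koszul[of "fst p" "fst q" Z1] by linarith
  qed
  then have 1: "fst w = C (fst p) (fst q)" by (rule m_uniq)
  have "m (snd w) Z2 = m (C (snd p) (snd q)) Z2" for Z2
  proof -
    have "2 * prod_metric m w (0, Z2) =
      prod_metric m (prod_br br p q) (0, Z2) - prod_metric m (prod_br br q (0, Z2)) p + prod_metric m (prod_br br (0, Z2) p) q"
      using w by (rule spec)
    then have "2 * m (snd w) Z2 = m (br (snd p) (snd q)) Z2 - m (br (snd q) Z2) (snd p) + m (br Z2 (snd p)) (snd q)"
      unfolding prod_metric_def prod_br_def fst_conv snd_conv by (simp add: m_zero_right m_zero_left brs)
    then show ?thesis using C_koszul[of "snd p" "snd q" Z2] by linarith
  qed
  then have 2: "snd w = C (snd p) (snd q)" by (rule m_uniq)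
  show "w = (C (fst p) (fst q), C (snd p) (snd q))" using 1 2 by (simp add: prod_eq_iff)
qed

lemma prod_curv: fixes p q r :: "'a \<times> 'a" shows "curv (prod_metric m) (prod_br br) p q r =
   (curv m br (fst p) (fst q) (fst r), curv m br (snd p) (snd q) (snd r))"
  unfolding curv_def prod_conn conn_eq prod_br_def by (simp add: prod_eq_iff)

lemma prod_sec: fixes p q :: "'a \<times> 'a" shows "prod_metric m (curv (prod_metric m) (prod_br br) p q q) p =
   m (curv m br (fst p) (fst q) (fst q)) (fst p) + m (curv m br (snd p) (snd q) (snd q)) (snd p)"
  unfolding prod_curv prod_metric_def by simp

lemma sec_nonneg: "0 \<le> m (curv m br X Y Y) X"
proof -
  obtain a x where ax: "a \<in> k" "orth x" "X = a + x" by (rule decomp)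
  obtain b y where bb: "b \<in> k" "orth y" "Y = b + y" by (rule decomp)
  show ?thesis unfolding ax(3) bb(3) sec_formula[OF ax(1,2) bb(1,2)] by (rule F_nonneg)
qed

lemma sec_neg: "m (curv m br (- X) (- Y) (- Y)) (- X) = m (curv m br X Y Y) X"
proof -
  obtain a x where ax: "a \<in> k" "orth x" "X = a + x" by (rule decomp)
  obtain b y where bb: "b \<in> k" "orth y" "Y = b + y" by (rule decomp)
  have na: "- a \<in> k" using ax subk by (simp add: subspace_neg)
  have nb: "- b \<in> k" using bb subk by (simp add: subspace_neg)
  have e1: "- X = (- a) + (- x)" "- Y = (- b) + (- y)" using ax bb by simp_all
  have "F (- a) (- x) (- b) (- y) = F a x b y" unfolding F_def Let_def by (simp add: brs P_neg)
  then show ?thesis unfolding e1 sec_formula[OF na orth_neg[OF ax(2)] nb orth_neg[OF bb(2)]]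
    unfolding ax(3) bb(3) sec_formula[OF ax(1,2) bb(1,2)] .
qed

end

theorem corollary2p3:
  fixes br :: "'a::euclidean_space \<Rightarrow> 'a \<Rightarrow> 'a"
    and k :: "'a set"
    and u :: "('a \<times> 'a) set"
    and A :: "'a \<Rightarrow> 'a"
    and t :: real
    and X Y :: 'a
  assumes lie: "is_lie_bracket br"
    and biinv: "ad_invariant br"
    and ksub: "lie_subalgebra br k"
    and tpos: "t > 0"
    and usub: "lie_subalgebra (prod_br br) u"
    and uk: "u \<subseteq> k \<times> k"
    and Alin: "linear A"
    and Abij: "bij A"
    and Abr: "\<And>x y. A (br x y) = br (A x) (A y)"
    and Aisom: "\<And>x y. inner (A x) (A y) = inner x y"
    and horiz: "\<And>\<xi> \<eta>. \<xi> \<in> span {(inv (cheeger_phi t k) (- A X), inv (cheeger_phi t k) X),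
                                 (inv (cheeger_phi t k) (- A Y), inv (cheeger_phi t k) Y)}
                 \<Longrightarrow> \<eta> \<in> vertical_space A u \<Longrightarrow> prod_metric (metric1 t k) \<xi> \<eta> = 0"
    and flat: "zero_curv (prod_metric (metric1 t k)) (prod_br br)
                 (inv (cheeger_phi t k) (- A X), inv (cheeger_phi t k) X)
                 (inv (cheeger_phi t k) (- A Y), inv (cheeger_phi t k) Y)"
  shows "zero_curv (metric1 t k) br (inv (cheeger_phi t k) (A X)) (inv (cheeger_phi t k) (A Y))
       \<and> zero_curv (metric1 t k) br (inv (cheeger_phi t k) X) (inv (cheeger_phi t k) Y)"
proof -
  interpret chg br k t using lie biinv ksub tpos by unfold_locales
  let ?S = "\<lambda>p q. metric1 t k (curv (metric1 t k) br p q q) p"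
  let ?i = "inv (cheeger_phi t k)"
  have "?S (?i (- A X)) (?i (- A Y)) + ?S (?i X) (?i Y) = 0"
    using flat unfolding zero_curv_def prod_sec by simp
  then have s: "?S (- ?i (A X)) (- ?i (A Y)) + ?S (?i X) (?i Y) = 0" by (simp only: inv_neg)
  have n1: "?S (- ?i (A X)) (- ?i (A Y)) \<ge> 0" by (rule sec_nonneg)
  have n2: "?S (?i X) (?i Y) \<ge> 0" by (rule sec_nonneg)
  have 1: "?S (- ?i (A X)) (- ?i (A Y)) = 0" using s n1 n2 by linarith
  have 2: "?S (?i X) (?i Y) = 0" using s n1 n2 by linarith
  show ?thesis unfolding zero_curv_def using 1 2 sec_neg by simp
qed

end
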